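(* Let $d\ge 1$ and let $(f_0, f_1, \ldots, f_{d-1})$ be a finite sequence of integers with $f_i > 0$ for all $i$. Put $f_{-1}=1$. The following conditions are equivalent: (i) there is a quasi-forest $\Delta$ of dimension $d-1$ with $f(\Delta) = (f_0, \ldots, f_{d-1})$; (ii) there is a forest $\Delta$ of dimension $d-1$ with $f(\Delta) = (f_0, \ldots, f_{d-1})$; (iii) the integers $c_0,\ldots,c_d$ defined by $\sum_{i=0}^{d} f_{i-1}(x-1)^{i} = \sum_{i=0}^{d} c_i x^i$ satisfy $\sum_{i=k}^{d} c_i > 0$ for each $1 \le k \le d$; (iv) the integers $b_1,\ldots,b_d$ defined by $\sum_{i=1}^{d} f_{i-1}(x-1)^{i-1} = \sum_{i=1}^{d} b_i x^{i-1}$ satisfy $b_i > 0$ for all $1 \le i \le d$.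
   Context: A simplicial complex $\Delta$ on $[n]=\{1,\ldots,n\}$ is a collection of subsets of $[n]$ such that $\{i\}\in\Delta$ for every $i\in[n]$ and $G\subset F\in\Delta$ implies $G\in\Delta$. If $d=\max\{|F|:F\in\Delta\}$, then $\dim\Delta=d-1$. Facets are maximal faces. The $f$-vector is $f(\Delta)=(f_0,\ldots,f_{d-1})$, where $f_i$ is the number of faces with $i+1$ elements. For facets $F_{i_1},\ldots,F_{i_q}$, $\langle F_{i_1},\ldots,F_{i_q}\rangle$ denotes the subcomplex consisting of all faces contained in some $F_{i_j}$. A facet $F$ of $\Delta$ is a leaf if there is a facet $G\neq F$ (a branch of $F$) with $H\cap F\subset G\cap F$ for all facets $H\neq F$. A quasi-forest is a simplicial complex whose facets admit an ordering $F_1,\ldots,F_s$ (a leaf order) such that for each $1<j\le s$, $F_j$ is a leaf of $\langle F_1,\ldots,F_j\rangle$. A forest is a simplicial complex such that for every nonempty subset $\{F_{i_1},\ldots,F_{i_q}\}$ of its facets, the subcomplex $\langle F_{i_1},\ldots,F_{i_q}\rangle$ has a leaf. (Here a complex with a single facet is regarded as a quasi-forest and forest, its single facet counting as a leaf.) *)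

theory Defs
  imports "HOL-Computational_Algebra.Polynomial"
begin

definition simplicial_complex :: "nat \<Rightarrow> nat set set \<Rightarrow> bool" where
  "simplicial_complex n \<Delta> \<longleftrightarrow>
     (\<forall>i\<in>{1..n}. {i} \<in> \<Delta>) \<and> (\<forall>F\<in>\<Delta>. F \<subseteq> {1..n}) \<and>
     (\<forall>F G. F \<in> \<Delta> \<longrightarrow> G \<subseteq> F \<longrightarrow> G \<in> \<Delta>)"

text \<open>Largest face size d; the dimension is d - 1.\<close>
definition face_size :: "nat set set \<Rightarrow> nat" where
  "face_size \<Delta> = Max (card ` \<Delta>)"

definition fnum :: "nat set set \<Rightarrow> nat \<Rightarrow> nat" where
  "fnum \<Delta> i = card {F \<in> \<Delta>. card F = i + 1}"

definition facets :: "nat set set \<Rightarrow> nat set set" where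
  "facets \<Delta> = {F \<in> \<Delta>. \<forall>G\<in>\<Delta>. F \<subseteq> G \<longrightarrow> G = F}"

definition gen :: "nat set set \<Rightarrow> nat set set" where
  "gen S = {G. \<exists>F\<in>S. G \<subseteq> F}"

text \<open>Leaf; a sole facet counts as a leaf.\<close>
definition is_leaf :: "nat set set \<Rightarrow> nat set \<Rightarrow> bool" where
  "is_leaf \<Delta> F \<longleftrightarrow> F \<in> facets \<Delta> \<and>
     (facets \<Delta> = {F} \<or>
      (\<exists>G\<in>facets \<Delta>. G \<noteq> F \<and> (\<forall>H\<in>facets \<Delta>. H \<noteq> F \<longrightarrow> H \<inter> F \<subseteq> G \<inter> F)))"

text \<open>Leaf order F_1..F_s (0-indexed list): for 1 < j <= s, F_j is a leaf of <F_1..F_j>.\<close>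
definition quasi_forest :: "nat set set \<Rightarrow> bool" where
  "quasi_forest \<Delta> \<longleftrightarrow> (\<exists>Fs. distinct Fs \<and> set Fs = facets \<Delta> \<and>
     (\<forall>j. 0 < j \<and> j < length Fs \<longrightarrow> is_leaf (gen (set (take (Suc j) Fs))) (Fs ! j)))"

definition forest :: "nat set set \<Rightarrow> bool" where
  "forest \<Delta> \<longleftrightarrow> (\<forall>S. S \<subseteq> facets \<Delta> \<longrightarrow> S \<noteq> {} \<longrightarrow> (\<exists>F. is_leaf (gen S) F))"

text \<open>f_{i-1} with the convention f_{-1} = 1.\<close>
definition fshift :: "(nat \<Rightarrow> int) \<Rightarrow> nat \<Rightarrow> int" where
  "fshift f i = (if i = 0 then 1 else f (i - 1))"

end

theory Submission
  imports Defs
begin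


definition Qp :: "nat set set \<Rightarrow> int poly" where
  "Qp D = (\<Sum>A\<in>D. [:-1,1:] ^ card A)"

lemma sum_Pow_pow:
  fixes y :: "'a::comm_semiring_1"
  assumes "finite F"
  shows "(\<Sum>A\<in>Pow F. y ^ card A) = (y + 1) ^ card F"
  using assms
proof (induction F rule: finite_induct)
  case empty
  then show ?case by simp
next
  case (insert a F)
  have inj: "inj_on (insert a) (Pow F)" using insert.hyps(2) unfolding inj_on_def by (metis PowD insert_ident rev_subsetD)
  have disj: "Pow F \<inter> insert a ` Pow F = {}" using insert.hyps(2) by auto
  have fin: "finite (Pow F)" "finite (insert a ` Pow F)" using insert.hyps(1) by auto
  have "(\<Sum>A\<in>Pow (insert a F). y ^ card A) = (\<Sum>A\<in>Pow F. y ^ card A) + (\<Sum>A\<in>insert a ` Pow F. y ^ card A)"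
    unfolding Pow_insert using sum.union_disjoint[OF fin disj] by simp
  also have "(\<Sum>A\<in>insert a ` Pow F. y ^ card A) = (\<Sum>A\<in>Pow F. y ^ card (insert a A))"
    using sum.reindex[OF inj] by simp
  also have "\<dots> = (\<Sum>A\<in>Pow F. y * y ^ card A)"
  proof (rule sum.cong)
    fix A assume "A \<in> Pow F"
    then have "finite A" "a \<notin> A" using insert.hyps finite_subset by auto
    then show "y ^ card (insert a A) = y * y ^ card A" by simp
  qed simp
  also have "\<dots> = y * (y+1) ^ card F" by (simp add: sum_distrib_left[symmetric] insert.IH)
  finally show ?case using insert.IH insert.hyps by (simp add: algebra_simps)
qed

lemma Xp1: "([:-1,1:] + 1 :: int poly) = [:0,1:]"
  by (simp add: one_pCons)

lemma Qp_Pow: "finite F \<Longrightarrow> Qp (Pow F) = [:0,1:] ^ card F"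
  unfolding Qp_def by (subst sum_Pow_pow) (simp_all add: Xp1)

lemma gen_insert: "gen (insert F S) = gen S \<union> Pow F"
  unfolding gen_def by auto

lemma gen_eq: "gen S = (\<Union>F\<in>S. Pow F)"
  unfolding gen_def by auto

lemma finite_gen: "finite S \<Longrightarrow> (\<forall>F\<in>S. finite F) \<Longrightarrow> finite (gen S)"
  unfolding gen_eq by auto

lemma attach:
  assumes "finite S" "\<forall>H\<in>S. finite H" "finite F" "G \<in> S" "\<forall>H\<in>S. H \<inter> F \<subseteq> G \<inter> F"
  shows "Qp (gen (insert F S)) = Qp (gen S) + [:0,1:] ^ card F - [:0,1:] ^ card (G \<inter> F)"
proof -
  have i: "gen S \<inter> Pow F = Pow (G \<inter> F)"
    using assms(4,5) unfolding gen_def by blast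
  have f1: "finite (gen S)" using finite_gen assms by blast
  have "Qp (gen S \<union> Pow F) + Qp (gen S \<inter> Pow F) = Qp (gen S) + Qp (Pow F)"
    unfolding Qp_def by (rule sum.union_inter) (use f1 assms(3) in auto)
  then have "Qp (gen S \<union> Pow F) + Qp (Pow (G \<inter> F)) = Qp (gen S) + Qp (Pow F)" unfolding i .
  moreover have "Qp (Pow (G \<inter> F)) = [:0,1:] ^ card (G \<inter> F)" using Qp_Pow assms(3) by blast
  ultimately show ?thesis unfolding gen_insert using Qp_Pow assms(3) by (simp add: algebra_simps)
qed

lemma facets_gen_sub: "facets (gen S) \<subseteq> S"
proof
  fix F assume "F \<in> facets (gen S)"
  then have "F \<in> gen S" "\<forall>G\<in>gen S. F \<subseteq> G \<longrightarrow> G = F" unfolding facets_def by auto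
  then obtain F' where "F' \<in> S" "F \<subseteq> F'" unfolding gen_def by auto
  moreover have "F' \<in> gen S" using \<open>F' \<in> S\<close> unfolding gen_def by auto
  ultimately show "F \<in> S" using \<open>\<forall>G\<in>gen S. F \<subseteq> G \<longrightarrow> G = F\<close> by metis
qed

lemma facets_gen_antichain:
  assumes "\<forall>A\<in>S. \<forall>B\<in>S. A \<subseteq> B \<longrightarrow> A = B"
  shows "facets (gen S) = S"
proof
  show "facets (gen S) \<subseteq> S" by (rule facets_gen_sub)
  show "S \<subseteq> facets (gen S)"
  proof
    fix F assume F: "F \<in> S"
    have "G = F" if G1: "G \<in> gen S" and G2: "F \<subseteq> G" for G
    proof -
      obtain G' where "G' \<in> S" "G \<subseteq> G'" using G1 unfolding gen_def by auto
      then have "F = G'" using assms F G2 by (meson order_trans)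
      then show ?thesis using \<open>G \<subseteq> G'\<close> G2 by auto
    qed
    moreover have "F \<in> gen S" using F unfolding gen_def by auto
    ultimately show "F \<in> facets (gen S)" unfolding facets_def by auto
  qed
qed

lemma Qp_group:
  assumes "finite D" "\<forall>A\<in>D. card A \<le> d"
  shows "Qp D = (\<Sum>j=0..d. smult (int (card {A\<in>D. card A = j})) ([:-1,1:] ^ j))"
proof -
  have "Qp D = (\<Sum>j\<in>{0..d}. \<Sum>A\<in>{A\<in>D. card A = j}. [:-1,1:] ^ card A)"
    unfolding Qp_def by (rule sum.group[symmetric]) (use assms in auto)
  also have "\<dots> = (\<Sum>j\<in>{0..d}. \<Sum>A\<in>{A\<in>D. card A = j}. [:-1,1:] ^ j)"
    by (intro sum.cong) auto
  also have "\<dots> = (\<Sum>j=0..d. smult (int (card {A\<in>D. card A = j})) ([:-1,1:] ^ j))"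
    by (simp add: of_nat_poly)
  finally show ?thesis .
qed

lemma uniq0:
  fixes a :: "nat \<Rightarrow> int"
  shows "(\<Sum>j=0..d. smult (a j) ([:-1,1:] ^ j)) = 0 \<Longrightarrow> \<forall>j\<le>d. a j = 0"
proof (induction d)
  case 0
  then show ?case by simp
next
  case (Suc d)
  have c: "coeff (\<Sum>j=0..d. smult (a j) ([:-1,1:] ^ j)) (Suc d) = 0"
    unfolding coeff_sum
    by (intro sum.neutral) (simp add: coeff_eq_0 degree_linear_power)
  have "coeff (\<Sum>j=0..Suc d. smult (a j) ([:-1,1:] ^ j)) (Suc d) = 0" using Suc.prems by simp
  moreover have "coeff ([:-1,1:]^Suc d) (Suc d) = (1::int)" by (rule coeff_linear_power)
  ultimately have "a (Suc d) = 0" using c by (simp only: sum.atLeast0_atMost_Suc coeff_add coeff_smult)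
  then have "(\<Sum>j=0..d. smult (a j) ([:-1,1:] ^ j)) = 0" using Suc.prems by simp
  then show ?case using Suc.IH \<open>a (Suc d) = 0\<close> le_Suc_eq by auto
qed

lemma uniq:
  fixes a b :: "nat \<Rightarrow> int"
  assumes "(\<Sum>j=0..d. smult (a j) ([:-1,1:] ^ j)) = (\<Sum>j=0..d. smult (b j) ([:-1,1:] ^ j))"
  shows "\<forall>j\<le>d. a j = b j"
proof -
  have "(\<Sum>j=0..d. smult (a j - b j) ([:-1,1:] ^ j)) = 0"
    using assms by (simp add: smult_diff_left sum_subtractf)
  then show ?thesis using uniq0[of "\<lambda>j. a j - b j"] by auto
qed

lemma PQ:
  fixes f :: "nat \<Rightarrow> int"
  shows "(\<Sum>j=0..d. smult (fshift f j) ([:-1,1:] ^ j))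
      = 1 + [:-1,1:] * (\<Sum>j=1..d. smult (f (j - 1)) ([:-1,1:] ^ (j - 1)))"
proof -
  have "(\<Sum>j=0..d. smult (fshift f j) ([:-1,1:] ^ j)) = smult (fshift f 0) ([:-1,1:] ^ 0) + (\<Sum>j=Suc 0..d. smult (fshift f j) ([:-1,1:] ^ j))"
    by (rule sum.atLeast_Suc_atMost) simp
  also have "(\<Sum>j=Suc 0..d. smult (fshift f j) ([:-1,1:] ^ j)) = (\<Sum>j=1..d. [:-1,1:] * smult (f (j - 1)) ([:-1,1:] ^ (j - 1)))"
  proof (intro sum.cong)
    fix j assume "j \<in> {1..d}"
    then have "j = Suc (j - 1)" by auto
    then have "[:-1,1:] ^ j = [:-1,1:] * [:-1,1:] ^ (j - 1)" by (metis power_Suc)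
    moreover have "fshift f j = f (j - 1)" using \<open>j \<in> {1..d}\<close> by (simp add: fshift_def)
    ultimately show "smult (fshift f j) ([:-1,1:] ^ j) = [:-1,1:] * smult (f (j - 1)) ([:-1,1:] ^ (j - 1))"
      by (metis mult_smult_right)
  qed simp
  moreover have "smult (fshift f 0) ([:-1,1:] ^ 0) = 1" by (simp add: fshift_def)
  ultimately show ?thesis by (simp only: sum_distrib_left)
qed

lemma coeff_XQ: "coeff ([:-1,1:] * Q) (Suc i) = coeff Q i - coeff (Q::int poly) (Suc i)"
proof -
  have "[:-1,1:] * Q = smult (-1) Q + pCons 0 Q"
    by (simp only: mult_pCons_left mult_zero_left pCons_0_0 smult_1_left add_0_right)
  then show ?thesis by (simp only: coeff_add coeff_smult coeff_pCons_Suc)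
qed

lemma tl_PQ:
  fixes Q :: "int poly"
  assumes "degree Q < d" "1 \<le> k" "k \<le> d"
  shows "(\<Sum>i=k..d. coeff (1 + [:-1,1:] * Q) i) = coeff Q (k - 1)"
proof -
  have "(\<Sum>i=k..d. coeff (1 + [:-1,1:] * Q) i) = (\<Sum>i=k..d. coeff Q (i - 1) - coeff Q i)"
  proof (intro sum.cong)
    fix i assume "i \<in> {k..d}"
    then have "i = Suc (i - 1)" using assms by auto
    then show "coeff (1 + [:-1,1:] * Q) i = coeff Q (i - 1) - coeff Q i"
      using coeff_XQ[of Q "i - 1"] \<open>i \<in> {k..d}\<close> assms by auto
  qed simp
  also have "\<dots> = - (\<Sum>i=k..d. coeff Q (Suc i - 1) - coeff Q (i - 1))"
    by (simp add: sum_negf[symmetric])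
  also have "\<dots> = - (coeff Q (Suc d - 1) - coeff Q (k - 1))"
    using sum_Suc_diff[of k d "\<lambda>i. coeff Q (i - 1)"] assms by simp
  also have "coeff Q (Suc d - 1) = 0" using assms by (simp add: coeff_eq_0)
  finally show ?thesis by simp
qed

lemma degree_Qf:
  fixes f :: "nat \<Rightarrow> int"
  assumes "d \<ge> 1"
  shows "degree (\<Sum>j=1..d. smult (f (j - 1)) ([:-1,1:] ^ (j - 1))) < d"
proof -
  have "degree (\<Sum>j=1..d. smult (f (j - 1)) ([:-1,1:] ^ (j - 1))) \<le> d - 1"
    by (intro degree_sum_le order.trans[OF degree_smult_le]) (auto simp: degree_linear_power)
  then show ?thesis using assms by linarith
qed



lemma forest_list:
  assumes "finite S" "\<forall>S'. S' \<subseteq> S \<longrightarrow> S' \<noteq> {} \<longrightarrow> (\<exists>F. is_leaf (gen S') F)"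
  shows "\<exists>Fs. distinct Fs \<and> set Fs = S \<and>
     (\<forall>j. 0 < j \<and> j < length Fs \<longrightarrow> is_leaf (gen (set (take (Suc j) Fs))) (Fs ! j))"
  using assms
proof (induction S rule: finite_psubset_induct)
  case (psubset S)
  show ?case
  proof (cases "S = {}")
    case True
    then show ?thesis by (intro exI[of _ "[]"]) simp
  next
    case False
    then obtain F where F: "is_leaf (gen S) F" using psubset.prems by blast
    then have "F \<in> facets (gen S)" unfolding is_leaf_def by simp
    then have "F \<in> S" using facets_gen_sub by auto
    then have "S - {F} \<subset> S" by blast
    moreover have "\<forall>S'. S' \<subseteq> S - {F} \<longrightarrow> S' \<noteq> {} \<longrightarrow> (\<exists>F. is_leaf (gen S') F)"
      using psubset.prems by auto
    ultimately have "\<exists>Fs. distinct Fs \<and> set Fs = S - {F} \<and>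
      (\<forall>j. 0 < j \<and> j < length Fs \<longrightarrow> is_leaf (gen (set (take (Suc j) Fs))) (Fs ! j))"
      by (rule psubset.IH)
    then obtain Fs where Fs: "distinct Fs" "set Fs = S - {F}"
      "\<forall>j. 0 < j \<and> j < length Fs \<longrightarrow> is_leaf (gen (set (take (Suc j) Fs))) (Fs ! j)"
      by blast
    show ?thesis
    proof (intro exI[of _ "Fs @ [F]"] conjI allI impI)
      show "distinct (Fs @ [F])" using Fs by simp
      show "set (Fs @ [F]) = S" using Fs \<open>F \<in> S\<close> by auto
    next
      fix j assume j: "0 < j \<and> j < length (Fs @ [F])"
      show "is_leaf (gen (set (take (Suc j) (Fs @ [F])))) ((Fs @ [F]) ! j)"
      proof (cases "j < length Fs")
        case True
        then show ?thesis using Fs(3) j by (simp add: nth_append)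
      next
        case False
        then have "j = length Fs" using j by simp
        then show ?thesis using F Fs \<open>F \<in> S\<close> by (simp add: insert_absorb)
      qed
    qed
  qed
qed

lemma sc_finite: "simplicial_complex n D \<Longrightarrow> finite D"
  unfolding simplicial_complex_def by (rule finite_subset[of _ "Pow {1..n}"]) auto

lemma sc_faces_finite: "simplicial_complex n D \<Longrightarrow> A \<in> D \<Longrightarrow> finite A"
  unfolding simplicial_complex_def by (meson finite_atLeastAtMost finite_subset)

lemma in_facet:
  assumes "finite D" "A \<in> D"
  shows "\<exists>F\<in>facets D. A \<subseteq> F"
proof -
  have "finite {B\<in>D. A \<subseteq> B}" "{B\<in>D. A \<subseteq> B} \<noteq> {}" using assms by auto
  from finite_has_maximal[OF this] obtain m where m: "m \<in> {B\<in>D. A \<subseteq> B}"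
    "\<forall>b\<in>{B\<in>D. A \<subseteq> B}. m \<le> b \<longrightarrow> m = b" by blast
  then have "m \<in> facets D" unfolding facets_def by auto
  then show ?thesis using m by blast
qed

lemma gen_facets:
  assumes "simplicial_complex n D"
  shows "gen (facets D) = D"
proof
  show "gen (facets D) \<subseteq> D"
  proof
    fix A assume "A \<in> gen (facets D)"
    then obtain F where "F \<in> facets D" "A \<subseteq> F" unfolding gen_def by auto
    then show "A \<in> D" using assms unfolding facets_def simplicial_complex_def by auto
  qed
  show "D \<subseteq> gen (facets D)" using in_facet[OF sc_finite[OF assms]] unfolding gen_def by auto
qed

lemma facets_antichain: "\<forall>A\<in>facets D. \<forall>B\<in>facets D. A \<subseteq> B \<longrightarrow> A = B"
  unfolding facets_def by auto

lemma forest_qf: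
  assumes "simplicial_complex n D" "forest D"
  shows "quasi_forest D"
proof -
  have "finite (facets D)" using sc_finite[OF assms(1)] unfolding facets_def by simp
  then show ?thesis using forest_list[of "facets D"] assms(2) unfolding forest_def quasi_forest_def by blast
qed



lemma tl_xpow: "(\<Sum>i=k..d. coeff ([:0,1:]^a :: int poly) i) = (if k \<le> a \<and> a \<le> d then 1 else 0)"
  by (simp add: monom_altdef[of 1, simplified, symmetric] coeff_monom)

lemma tl_lin: "(\<Sum>i=k..d. coeff (p + q - r :: int poly) i) =
   (\<Sum>i=k..d. coeff p i) + (\<Sum>i=k..d. coeff q i) - (\<Sum>i=k..d. coeff r i)"
  by (simp add: sum.distrib sum_subtractf)

lemma notin_take: "distinct xs \<Longrightarrow> m < length xs \<Longrightarrow> xs ! m \<notin> set (take m xs)"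
proof -
  assume a: "distinct xs" "m < length xs"
  have "xs ! m \<in> set (drop m xs)" using a(2) by (metis Cons_nth_drop_Suc list.set_intros(1))
  moreover have "set (take m xs) \<inter> set (drop m xs) = {}" using a(1) by (metis append_take_drop_id distinct_append)
  ultimately show ?thesis by blast
qed

lemma qf_tail:
  assumes sc: "simplicial_complex n D" and qf: "quasi_forest D"
    and bd: "\<forall>A\<in>D. card A \<le> d" and A0: "A0 \<in> D" "card A0 = d"
  shows "\<forall>k\<in>{1..d}. (\<Sum>i=k..d. coeff (Qp D) i) > 0"
proof -
  obtain Fs where Fs: "distinct Fs" "set Fs = facets D"
    "\<forall>j. 0 < j \<and> j < length Fs \<longrightarrow> is_leaf (gen (set (take (Suc j) Fs))) (Fs ! j)"
    using qf unfolding quasi_forest_def by blast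
  have facD: "facets D \<subseteq> D" unfolding facets_def by blast
  have finF: "\<forall>F\<in>set Fs. finite F" using Fs(2) facD sc_faces_finite[OF sc] by blast
  have bdF: "\<forall>F\<in>set Fs. card F \<le> d" using Fs(2) facD bd by blast
  have anti: "\<forall>A\<in>set Fs. \<forall>B\<in>set Fs. A \<subseteq> B \<longrightarrow> A = B" using Fs(2) facets_antichain by metis
  define tl where "tl k p = (\<Sum>i=k..d. coeff (p::int poly) i)" for k p
  define inv where "inv m \<longleftrightarrow> (\<forall>k\<ge>1. tl k (Qp (gen (set (take m Fs)))) \<ge> 0) \<and>
      (\<forall>k\<ge>1. (\<exists>F\<in>set (take m Fs). k \<le> card F) \<longrightarrow> tl k (Qp (gen (set (take m Fs)))) \<ge> 1)" for m
  have step: "inv m \<Longrightarrow> 1 \<le> m \<Longrightarrow> m < length Fs \<Longrightarrow> inv (Suc m)" for m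
  proof -
    assume IH: "inv m" and m: "1 \<le> m" "m < length Fs"
    define F where "F = Fs ! m"
    define S where "S = set (take m Fs)"
    have ins: "set (take (Suc m) Fs) = insert F S"
      unfolding F_def S_def using take_Suc_conv_app_nth[OF m(2)] by simp
    have FnS: "F \<notin> S" unfolding F_def S_def using notin_take[OF Fs(1) m(2)] .
    have FFs: "F \<in> set Fs" unfolding F_def using m(2) by simp
    have SFs: "S \<subseteq> set Fs" unfolding S_def by (meson set_take_subset)
    have "Fs \<noteq> []" using m by auto
    then have Sne: "S \<noteq> {}" unfolding S_def using m by (simp add: take_eq_Nil)
    have "0 < m \<and> m < length Fs" using m by simp
    then have "is_leaf (gen (set (take (Suc m) Fs))) (Fs ! m)" using Fs(3) by blast
    then have leaf: "is_leaf (gen (insert F S)) F" unfolding ins F_def .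
    have fac: "facets (gen (insert F S)) = insert F S"
      by (rule facets_gen_antichain) (use anti FFs SFs in blast)
    have "insert F S \<noteq> {F}" using Sne FnS by blast
    then have "\<exists>G\<in>insert F S. G \<noteq> F \<and> (\<forall>H\<in>insert F S. H \<noteq> F \<longrightarrow> H \<inter> F \<subseteq> G \<inter> F)"
      using leaf unfolding is_leaf_def fac by simp
    then obtain G where G0: "G \<in> insert F S" "G \<noteq> F" "\<forall>H\<in>insert F S. H \<noteq> F \<longrightarrow> H \<inter> F \<subseteq> G \<inter> F"
      by blast
    have G: "G \<in> S" "\<forall>H\<in>S. H \<inter> F \<subseteq> G \<inter> F" using G0 FnS by auto
    have finS: "finite S" "\<forall>H\<in>S. finite H" "finite F" using finF SFs FFs unfolding S_def by auto
    have Q: "Qp (gen (insert F S)) = Qp (gen S) + [:0,1:] ^ card F - [:0,1:] ^ card (G \<inter> F)"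
      by (rule attach) (use finS G in auto)
    have "G \<in> set Fs" using SFs G(1) by auto
    then have "\<not> F \<subseteq> G" using anti FFs G0(2) by metis
    then have "G \<inter> F \<subset> F" by auto
    then have lt: "card (G \<inter> F) < card F" using finS(3) by (meson psubset_card_mono)
    have cF: "card F \<le> d" using bdF FFs by blast
    have finG: "finite G" using finF \<open>G \<in> set Fs\<close> by auto
    have cG: "card G \<le> d" "card (G \<inter> F) \<le> card G" using bdF \<open>G \<in> set Fs\<close> finG by (auto intro: card_mono)
    have tlk: "tl k (Qp (gen (insert F S))) = tl k (Qp (gen S)) + (if k \<le> card F then 1 else 0)
        - (if k \<le> card (G \<inter> F) then 1 else 0)" for k
      unfolding Q tl_def tl_lin tl_xpow using cF cG by auto
    have IH1: "\<forall>k\<ge>1. tl k (Qp (gen S)) \<ge> 0" and IH2: "\<forall>k\<ge>1. (\<exists>F\<in>S. k \<le> card F) \<longrightarrow> tl k (Qp (gen S)) \<ge> 1"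
      using IH unfolding inv_def S_def by auto
    show "inv (Suc m)" unfolding inv_def ins
    proof (intro conjI allI impI)
      fix k :: nat assume k: "1 \<le> k"
      then show "tl k (Qp (gen (insert F S))) \<ge> 0" using IH1 lt unfolding tlk by auto
    next
      fix k :: nat assume k: "1 \<le> k" and ex: "\<exists>F'\<in>insert F S. k \<le> card F'"
      show "tl k (Qp (gen (insert F S))) \<ge> 1"
      proof (cases "\<exists>F'\<in>S. k \<le> card F'")
        case True
        then show ?thesis using IH1 IH2 k lt unfolding tlk by force
      next
        case False
        then have kF: "k \<le> card F" using ex by blast
        show ?thesis
        proof (cases "k \<le> card (G \<inter> F)")
          case True
          then have "k \<le> card G" using cG by linarith
          then show ?thesis using False G(1) by auto
        next
          case False
          then show ?thesis using IH1 k kF unfolding tlk by force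
        qed
      qed
    qed
  qed
  have len: "1 \<le> length Fs"
  proof -
    obtain F where "F \<in> facets D" using in_facet[OF sc_finite[OF sc] A0(1)] by blast
    then show ?thesis using Fs(2) by (cases Fs) auto
  qed
  have base: "inv 1"
  proof -
    obtain F0 Fs' where F0: "Fs = F0 # Fs'" using len by (cases Fs) auto
    have s1: "set (take 1 Fs) = {F0}" using F0 by simp
    have "finite F0" "card F0 \<le> d" using finF bdF F0 by auto
    then have "Qp (gen (set (take 1 Fs))) = [:0,1:] ^ card F0"
      unfolding s1 gen_eq using Qp_Pow by simp
    then show ?thesis unfolding inv_def tl_def s1 using \<open>card F0 \<le> d\<close> by (auto simp: tl_xpow)
  qed
  have all: "1 \<le> m \<Longrightarrow> m \<le> length Fs \<Longrightarrow> inv m" for m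
  proof (induction m)
    case 0
    then show ?case by simp
  next
    case (Suc m)
    show ?case
    proof (cases "m = 0")
      case True
      then show ?thesis using base by simp
    next
      case False
      then show ?thesis using Suc step by simp
    qed
  qed
  have "inv (length Fs)" using all len by simp
  moreover have "gen (set (take (length Fs) Fs)) = D" using Fs(2) gen_facets[OF sc] by simp
  ultimately have I: "\<forall>k\<ge>1. (\<exists>F\<in>facets D. k \<le> card F) \<longrightarrow> tl k (Qp D) \<ge> 1"
    unfolding inv_def using Fs(2) by simp
  obtain F where F: "F \<in> facets D" "A0 \<subseteq> F" using in_facet[OF sc_finite[OF sc] A0(1)] by blast
  have "finite F" using F facD sc_faces_finite[OF sc] by blast
  then have "d \<le> card F" using F A0(2) card_mono by metis
  show ?thesis
  proof
    fix k assume "k \<in> {1..d}"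
    then have "k \<le> card F" "1 \<le> k" using \<open>d \<le> card F\<close> by auto
    then have "tl k (Qp D) \<ge> 1" using I F(1) by blast
    then show "(\<Sum>i=k..d. coeff (Qp D) i) > 0" unfolding tl_def by simp
  qed
qed



definition combS :: "nat \<Rightarrow> nat list \<Rightarrow> nat set set" where
  "combS d ks = insert {1..d} ((\<lambda>i. insert (d+1+i) {1..<ks!i}) ` {..<length ks})"

lemma comb_Qp_aux:
  assumes "\<forall>k\<in>set ks. 1 \<le> k \<and> k \<le> d" "m \<le> length ks"
  shows "Qp (gen (insert {1..d} ((\<lambda>i. insert (d+1+i) {1..<ks!i}) ` {..<m})))
       = [:0,1:]^d + (\<Sum>i<m. [:0,1:]^(ks!i) - [:0,1:]^(ks!i - 1))"
  using assms(2)
proof (induction m)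
  case 0
  have "gen {{1..d}} = Pow {1..d}" unfolding gen_eq by simp
  then show ?case using Qp_Pow[of "{1..d}"] by simp
next
  case (Suc m)
  define S where "S = insert {1..d} ((\<lambda>i. insert (d+1+i) {1..<ks!i}) ` {..<m})"
  define F where "F = insert (d+1+m) {1..<ks!m}"
  have km: "1 \<le> ks!m" "ks!m \<le> d" using assms(1) Suc.prems by auto
  have bd: "\<forall>i<m. ks!i \<le> d" using assms(1) Suc.prems by auto
  have eq: "insert {1..d} ((\<lambda>i. insert (d+1+i) {1..<ks!i}) ` {..<Suc m}) = insert F S"
    unfolding S_def F_def lessThan_Suc by auto
  have int: "\<forall>H\<in>S. H \<inter> F \<subseteq> {1..d} \<inter> F"
  proof
    fix H assume "H \<in> S"
    then consider "H = {1..d}" | i where "i < m" "H = insert (d+1+i) {1..<ks!i}" unfolding S_def by auto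
    then show "H \<inter> F \<subseteq> {1..d} \<inter> F"
    proof cases
      case 1 then show ?thesis by simp
    next
      case 2 then show ?thesis using km bd unfolding F_def by auto
    qed
  qed
  have Q: "Qp (gen (insert F S)) = Qp (gen S) + [:0,1:] ^ card F - [:0,1:] ^ card ({1..d} \<inter> F)"
    by (rule attach) (use int in \<open>auto simp: S_def F_def\<close>)
  have cF: "card F = ks!m" unfolding F_def using km by simp
  have "{1..d} \<inter> F = {1..<ks!m}" unfolding F_def using km by auto
  then have cGF: "card ({1..d} \<inter> F) = ks!m - 1" by simp
  show ?case unfolding eq Q cF cGF using Suc by (simp add: S_def)
qed

lemma comb_Qp:
  assumes "\<forall>k\<in>set ks. 1 \<le> k \<and> k \<le> d"
  shows "Qp (gen (combS d ks)) = [:0,1:]^d + (\<Sum>i<length ks. [:0,1:]^(ks!i) - [:0,1:]^(ks!i - 1))"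
  unfolding combS_def using comb_Qp_aux[OF assms order_refl] .

lemma comb_mem:
  "H \<in> combS d ks \<Longrightarrow> H = {1..d} \<or> (\<exists>i<length ks. H = insert (d+1+i) {1..<ks!i})"
  unfolding combS_def by auto

lemma comb_props:
  assumes "\<forall>k\<in>set ks. 1 \<le> k \<and> k \<le> d" "d \<ge> 1"
  shows "\<forall>H\<in>combS d ks. \<exists>c. H \<inter> {1..d} = {1..c}"
    "\<forall>H\<in>combS d ks. \<forall>F\<in>combS d ks. H \<noteq> F \<longrightarrow> H \<inter> F \<subseteq> {1..d}"
    "\<forall>H\<in>combS d ks. \<forall>F\<in>combS d ks. H \<subseteq> F \<longrightarrow> H = F"
    "\<forall>H\<in>combS d ks. finite H \<and> card H \<le> d \<and> H \<subseteq> {1..d + length ks}"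
    "{1..d} \<in> combS d ks"
proof -
  have bd: "\<And>i. i < length ks \<Longrightarrow> 1 \<le> ks!i \<and> ks!i \<le> d" using assms(1) by auto
  show "\<forall>H\<in>combS d ks. \<exists>c. H \<inter> {1..d} = {1..c}"
  proof
    fix H assume "H \<in> combS d ks"
    then consider "H = {1..d}" | i where "i < length ks" "H = insert (d+1+i) {1..<ks!i}" using comb_mem by blast
    then show "\<exists>c. H \<inter> {1..d} = {1..c}"
    proof cases
      case 1 then show ?thesis by auto
    next
      case 2
      then have "H \<inter> {1..d} = {1..ks!i - 1}" using bd[of i] by auto
      then show ?thesis by blast
    qed
  qed
  show "\<forall>H\<in>combS d ks. \<forall>F\<in>combS d ks. H \<noteq> F \<longrightarrow> H \<inter> F \<subseteq> {1..d}"
  proof (intro ballI impI)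
    fix H F assume H: "H \<in> combS d ks" and F: "F \<in> combS d ks" and ne: "H \<noteq> F"
    show "H \<inter> F \<subseteq> {1..d}"
    proof (cases "H = {1..d} \<or> F = {1..d}")
      case True then show ?thesis by auto
    next
      case False
      then obtain i j where "i < length ks" "H = insert (d+1+i) {1..<ks!i}"
        "j < length ks" "F = insert (d+1+j) {1..<ks!j}" using H F comb_mem by metis
      then show ?thesis using ne bd[of i] bd[of j] by auto
    qed
  qed
  show "\<forall>H\<in>combS d ks. \<forall>F\<in>combS d ks. H \<subseteq> F \<longrightarrow> H = F"
  proof (intro ballI impI)
    fix H F assume H: "H \<in> combS d ks" and F: "F \<in> combS d ks" and sub: "H \<subseteq> F"
    consider "H = {1..d}" | i where "i < length ks" "H = insert (d+1+i) {1..<ks!i}" using H comb_mem by blast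
    then show "H = F"
    proof cases
      case 1
      consider "F = {1..d}" | j where "j < length ks" "F = insert (d+1+j) {1..<ks!j}" using F comb_mem by blast
      then show ?thesis
      proof cases
        case 1 then show ?thesis using \<open>H = {1..d}\<close> by simp
      next
        case 2
        have "d \<in> H" using \<open>H = {1..d}\<close> assms(2) by simp
        moreover have "d \<notin> F" using 2 bd[of j] by auto
        ultimately show ?thesis using sub by blast
      qed
    next
      case 2
      have "d+1+i \<in> H" using 2 by simp
      then have inF: "d+1+i \<in> F" using sub by blast
      have Hi: "H = insert (d+1+i) {1..<ks!i}" using 2 by simp
      consider "F = {1..d}" | j where "j < length ks" "F = insert (d+1+j) {1..<ks!j}" using F comb_mem by blast
      then show ?thesis
      proof cases
        case 1 then show ?thesis using inF by simp
      next
        case (2 j)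
        then have "i = j" using inF bd[of j] by auto
        then show ?thesis using 2 Hi by simp
      qed
    qed
  qed
  show "\<forall>H\<in>combS d ks. finite H \<and> card H \<le> d \<and> H \<subseteq> {1..d + length ks}"
  proof
    fix H assume "H \<in> combS d ks"
    then consider "H = {1..d}" | i where "i < length ks" "H = insert (d+1+i) {1..<ks!i}" using comb_mem by blast
    then show "finite H \<and> card H \<le> d \<and> H \<subseteq> {1..d + length ks}"
    proof cases
      case 1 then show ?thesis by auto
    next
      case 2 then show ?thesis using bd[of i] by auto
    qed
  qed
  show "{1..d} \<in> combS d ks" unfolding combS_def by simp
qed



lemma comb_complex:
  assumes ks: "\<forall>k\<in>set ks. 1 \<le> k \<and> k \<le> d" and d: "d \<ge> 1"
  shows "simplicial_complex (d + length ks) (gen (combS d ks))"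
    "forest (gen (combS d ks))"
    "face_size (gen (combS d ks)) = d"
    "\<forall>A\<in>gen (combS d ks). card A \<le> d"
    "finite (gen (combS d ks))"
proof -
  let ?S = "combS d ks"
  let ?B = "{1..d}::nat set"
  note P = comb_props[OF ks d]
  have finS: "finite ?S" unfolding combS_def by simp
  show fin: "finite (gen ?S)" using finite_gen[OF finS] P(4) by blast
  show bd: "\<forall>A\<in>gen ?S. card A \<le> d"
  proof
    fix A assume "A \<in> gen ?S"
    then obtain H where H: "H \<in> ?S" "A \<subseteq> H" unfolding gen_def by auto
    then have "finite H" "card H \<le> d" using P(4) by auto
    then show "card A \<le> d" using H(2) card_mono by (metis order_trans)
  qed
  show "simplicial_complex (d + length ks) (gen ?S)"
    unfolding simplicial_complex_def
  proof (intro conjI ballI allI impI)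
    fix i assume i: "i \<in> {1..d + length ks}"
    show "{i} \<in> gen ?S"
    proof (cases "i \<le> d")
      case True
      then have "{i} \<subseteq> ?B" using i by auto
      then show ?thesis using P(5) unfolding gen_def by blast
    next
      case False
      define j where "j = i - d - 1"
      have j: "j < length ks" "i = d+1+j" using i False unfolding j_def by auto
      then have "insert (d+1+j) {1..<ks!j} \<in> ?S" unfolding combS_def by auto
      moreover have "{i} \<subseteq> insert (d+1+j) {1..<ks!j}" using j by auto
      ultimately show ?thesis unfolding gen_def by blast
    qed
  next
    fix F assume "F \<in> gen ?S"
    then obtain H where H: "H \<in> ?S" "F \<subseteq> H" unfolding gen_def by auto
    then show "F \<subseteq> {1..d + length ks}" using P(4) by blast
  next
    fix F G assume "F \<in> gen ?S" "G \<subseteq> F"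
    then show "G \<in> gen ?S" unfolding gen_def by blast
  qed
  show "face_size (gen ?S) = d"
    unfolding face_size_def
  proof (rule Max_eqI)
    show "finite (card ` gen ?S)" using fin by simp
    show "\<And>y. y \<in> card ` gen ?S \<Longrightarrow> y \<le> d" using bd by auto
    have "?B \<in> gen ?S" using P(5) unfolding gen_def by blast
    then show "d \<in> card ` gen ?S" by force
  qed
  have key: "H \<inter> F = F \<inter> ?B" if h: "H \<in> ?S" "F \<in> ?S" "H \<noteq> F" "card (F \<inter> ?B) \<le> card (H \<inter> ?B)" for H F
  proof -
    obtain cH cF where c: "H \<inter> ?B = {1..cH}" "F \<inter> ?B = {1..cF}" using P(1) h(1,2) by meson
    then have "cF \<le> cH" using h(4) by simp
    have "H \<inter> F = (H \<inter> ?B) \<inter> (F \<inter> ?B)" using P(2) h(1-3) by blast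
    also have "\<dots> = {1..cF}" unfolding c using \<open>cF \<le> cH\<close> by auto
    finally show ?thesis using c by simp
  qed
  have facS: "facets (gen ?S) = ?S" by (rule facets_gen_antichain) (use P(3) in blast)
  show "forest (gen ?S)"
    unfolding forest_def facS
  proof (intro allI impI)
    fix S' assume S': "S' \<subseteq> ?S" "S' \<noteq> {}"
    have facS': "facets (gen S') = S'" by (rule facets_gen_antichain) (use P(3) S'(1) in blast)
    obtain F0 where "F0 \<in> S'" using S' by blast
    then obtain F where F: "F \<in> S'" "\<forall>H. H \<in> S' \<longrightarrow> card (F \<inter> ?B) \<le> card (H \<inter> ?B)"
      using ex_has_least_nat[of "\<lambda>F. F \<in> S'" F0 "\<lambda>F. card (F \<inter> ?B)"] by blast
    show "\<exists>F. is_leaf (gen S') F"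
    proof (cases "S' = {F}")
      case True
      then show ?thesis unfolding is_leaf_def facS' by blast
    next
      case False
      then obtain G where G: "G \<in> S'" "G \<noteq> F" using F(1) by blast
      have "\<forall>H\<in>S'. H \<noteq> F \<longrightarrow> H \<inter> F \<subseteq> G \<inter> F"
      proof (intro ballI impI)
        fix H assume "H \<in> S'" "H \<noteq> F"
        then have "H \<inter> F = F \<inter> ?B" using key[of H F] F S'(1) by blast
        moreover have "G \<inter> F = F \<inter> ?B" using key[of G F] F S'(1) G by blast
        ultimately show "H \<inter> F \<subseteq> G \<inter> F" by simp
      qed
      then show ?thesis unfolding is_leaf_def facS' using F(1) G by blast
    qed
  qed
qed



lemma fvec_Qp:
  assumes sc: "simplicial_complex n D" and fs: "face_size D = d" and d: "d \<ge> 1"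
    and fpos: "\<forall>i<d. f i > 0" and fv: "\<forall>i<d. int (fnum D i) = f i"
  shows "Qp D = (\<Sum>j=0..d. smult (fshift f j) ([:-1,1:] ^ j))"
    "\<forall>A\<in>D. card A \<le> d" "\<exists>A0\<in>D. card A0 = d"
proof -
  have fin: "finite D" using sc_finite[OF sc] .
  have "int (fnum D 0) > 0" using fv fpos d by auto
  then have "{F \<in> D. card F = 0 + 1} \<noteq> {}" unfolding fnum_def by (metis card.empty of_nat_0 less_irrefl)
  then have ne: "D \<noteq> {}" by blast
  show bd: "\<forall>A\<in>D. card A \<le> d" using fs fin unfolding face_size_def by auto
  have "d \<in> card ` D" using fs fin ne unfolding face_size_def by (metis Max_in finite_imageI image_is_empty)
  then show "\<exists>A0\<in>D. card A0 = d" by auto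
  obtain A where "A \<in> D" using ne by blast
  then have emp: "{} \<in> D" using sc unfolding simplicial_complex_def by blast
  have "Qp D = (\<Sum>j=0..d. smult (int (card {A\<in>D. card A = j})) ([:-1,1:] ^ j))"
    by (rule Qp_group[OF fin bd])
  also have "\<dots> = (\<Sum>j=0..d. smult (fshift f j) ([:-1,1:] ^ j))"
  proof (rule sum.cong)
    fix j assume j: "j \<in> {0..d}"
    have "int (card {A\<in>D. card A = j}) = fshift f j"
    proof (cases "j = 0")
      case True
      have "{A\<in>D. card A = 0} = {{}}" using emp sc_faces_finite[OF sc] by auto
      then show ?thesis using True by (simp add: fshift_def)
    next
      case False
      then have j1: "j - 1 < d" "Suc (j - 1) = j" using j by auto
      have "int (card {F\<in>D. card F = (j - 1) + 1}) = f (j - 1)" using fv j1(1) unfolding fnum_def by blast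
      then show ?thesis using False by (simp add: fshift_def j1(2))
    qed
    then show "smult (int (card {A\<in>D. card A = j})) ([:-1,1:] ^ j) = smult (fshift f j) ([:-1,1:] ^ j)" by simp
  qed simp
  finally show "Qp D = (\<Sum>j=0..d. smult (fshift f j) ([:-1,1:] ^ j))" .
qed

lemma sum_list_map_concat: "sum_list (map g (concat xss)) = sum_list (map (\<lambda>xs. sum_list (map g xs)) xss)"
  by (induction xss) auto

lemma Xmul: "[:-1,1:] * p = pCons 0 p - (p :: int poly)"
proof -
  have "[:-1,1:] * p = smult (-1) p + pCons 0 p"
    by (simp only: mult_pCons_left mult_zero_left pCons_0_0 smult_1_left add_0_right)
  then show ?thesis by simp
qed

lemma xSuc: "([:0,1:] :: int poly) ^ Suc i = pCons 0 ([:0,1:] ^ i)"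
proof -
  have "([:0,1:] :: int poly) ^ Suc i = [:0,1:] * [:0,1:] ^ i" by (rule power_Suc)
  also have "\<dots> = pCons 0 ([:0,1:] ^ i)"
    by (simp only: mult_pCons_left mult_zero_left pCons_0_0 smult_1_left add_0_right smult_0_left add_0_left)
  finally show ?thesis .
qed

lemma Xmul_x: "([:-1,1:] :: int poly) * [:0,1:] ^ i = [:0,1:] ^ Suc i - [:0,1:] ^ i"
  unfolding Xmul xSuc ..

lemma ofint_mult: "(of_int z :: int poly) * p = smult z p"
  by (simp add: of_int_poly)

lemma ofnat_nat_mult: "z \<ge> 0 \<Longrightarrow> (of_nat (nat z) :: int poly) * p = smult z p"
  by (simp add: of_nat_poly)

lemma construct:
  fixes f :: "nat \<Rightarrow> int"
  assumes d: "d \<ge> 1"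
    and IV: "\<forall>i\<in>{1..d}. coeff (\<Sum>j=1..d. smult (f (j - 1)) ([:-1, 1:] ^ (j - 1))) (i - 1) > 0"
  shows "\<exists>n D. simplicial_complex n D \<and> forest D \<and> face_size D = d \<and> (\<forall>i<d. int (fnum D i) = f i)"
proof -
  define Qf where "Qf = (\<Sum>j=1..d. smult (f (j - 1)) ([:-1, 1:] ^ (j - 1)))"
  define c where "c i = coeff Qf i" for i
  define x :: "int poly" where "x = [:0,1:]"
  define g where "g k = x ^ k - x ^ (k - 1)" for k
  have cpos: "\<forall>i<d. c i > 0"
  proof (intro allI impI)
    fix i assume "i < d"
    then have "Suc i \<in> {1..d}" by simp
    then show "c i > 0" using IV unfolding c_def Qf_def by fastforce
  qed
  define ks where "ks = concat (map (\<lambda>i. replicate (nat (c i - 1)) (Suc i)) [0..<d])"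
  have ksb: "\<forall>k\<in>set ks. 1 \<le> k \<and> k \<le> d" unfolding ks_def by auto
  note CC = comb_complex[OF ksb d]
  let ?D = "gen (combS d ks)"
  have "Qp ?D = x^d + (\<Sum>i<length ks. g (ks!i))"
    unfolding comb_Qp[OF ksb] g_def x_def ..
  also have "(\<Sum>i<length ks. g (ks!i)) = sum_list (map g ks)"
    by (simp add: sum_list_sum_nth atLeast0LessThan)
  also have "\<dots> = (\<Sum>i<d. of_nat (nat (c i - 1)) * g (Suc i))"
    unfolding ks_def sum_list_map_concat map_map
    by (simp add: sum_set_upt_conv_sum_list_nat[symmetric] atLeast0LessThan o_def sum_list_replicate)
  also have "\<dots> = (\<Sum>i<d. smult (c i) (g (Suc i)) - g (Suc i))"
  proof (rule sum.cong)
    fix i assume "i \<in> {..<d}"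
    then have "c i - 1 \<ge> 0" using cpos by auto
    then show "of_nat (nat (c i - 1)) * g (Suc i) = smult (c i) (g (Suc i)) - g (Suc i)"
      by (simp add: left_diff_distrib ofint_mult)
  qed simp
  also have "\<dots> = (\<Sum>i<d. smult (c i) (g (Suc i))) - (\<Sum>i<d. g (Suc i))"
    by (rule sum_subtractf)
  also have "(\<Sum>i<d. g (Suc i)) = x ^ d - 1"
    using sum_Suc_diff'[of 0 d "\<lambda>i. x ^ i"] unfolding g_def by (simp add: atLeast0LessThan)
  finally have Q1: "Qp ?D = 1 + (\<Sum>i<d. smult (c i) (g (Suc i)))" by simp
  have "degree Qf \<le> d - 1" using degree_Qf[OF d, of f] unfolding Qf_def by simp
  then have "Qf = (\<Sum>i\<le>d - 1. monom (c i) i)" unfolding c_def using poly_as_sum_of_monoms' by metis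
  also have "\<dots> = (\<Sum>i<d. smult (c i) (x ^ i))"
    using d by (simp add: monom_altdef x_def lessThan_Suc_atMost[symmetric])
  finally have Qf: "Qf = (\<Sum>i<d. smult (c i) (x ^ i))" .
  have "(\<Sum>j=0..d. smult (fshift f j) ([:-1,1:] ^ j)) = 1 + [:-1,1:] * Qf"
    unfolding Qf_def by (rule PQ)
  also have "[:-1,1:] * Qf = (\<Sum>i<d. smult (c i) (g (Suc i)))"
    unfolding Qf sum_distrib_left mult_smult_right
    by (simp only: g_def x_def Xmul_x diff_Suc_1)
  finally have P: "Qp ?D = (\<Sum>j=0..d. smult (fshift f j) ([:-1,1:] ^ j))" using Q1 by simp
  have G: "Qp ?D = (\<Sum>j=0..d. smult (int (card {A\<in>?D. card A = j})) ([:-1,1:] ^ j))"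
    by (rule Qp_group) (use CC in auto)
  have E: "(\<Sum>j=0..d. smult (int (card {A\<in>?D. card A = j})) ([:-1,1:] ^ j)) = (\<Sum>j=0..d. smult (fshift f j) ([:-1,1:] ^ j))"
    using trans[OF sym[OF G] P] .
  have "\<forall>j\<le>d. int (card {A\<in>?D. card A = j}) = fshift f j" using uniq[OF E] .
  then have fv: "\<forall>i<d. int (fnum ?D i) = f i" unfolding fnum_def fshift_def by auto
  have "simplicial_complex (d + length ks) ?D \<and> forest ?D \<and> face_size ?D = d \<and> (\<forall>i<d. int (fnum ?D i) = f i)"
    using CC(1,2,3) fv by (intro conjI)
  then show ?thesis by (intro exI)
qed

theorem theorem1p1:
  fixes d :: nat and f :: "nat \<Rightarrow> int"
  assumes "d \<ge> 1"
    and "\<forall>i<d. f i > 0"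
  shows
   "((\<exists>n \<Delta>. simplicial_complex n \<Delta> \<and> quasi_forest \<Delta> \<and> face_size \<Delta> = d \<and>
        (\<forall>i<d. int (fnum \<Delta> i) = f i))
     \<longleftrightarrow> (\<exists>n \<Delta>. simplicial_complex n \<Delta> \<and> forest \<Delta> \<and> face_size \<Delta> = d \<and>
        (\<forall>i<d. int (fnum \<Delta> i) = f i)))
    \<and> ((\<exists>n \<Delta>. simplicial_complex n \<Delta> \<and> forest \<Delta> \<and> face_size \<Delta> = d \<and>
        (\<forall>i<d. int (fnum \<Delta> i) = f i))
     \<longleftrightarrow> (\<forall>k\<in>{1..d}. (\<Sum>i=k..d. coeff (\<Sum>j=0..d. smult (fshift f j) ([:-1, 1:] ^ j)) i) > 0))
    \<and> ((\<forall>k\<in>{1..d}. (\<Sum>i=k..d. coeff (\<Sum>j=0..d. smult (fshift f j) ([:-1, 1:] ^ j)) i) > 0)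
     \<longleftrightarrow> (\<forall>i\<in>{1..d}. coeff (\<Sum>j=1..d. smult (f (j - 1)) ([:-1, 1:] ^ (j - 1))) (i - 1) > 0))"
  (is "(?I \<longleftrightarrow> ?II) \<and> (?II \<longleftrightarrow> ?III) \<and> (?III \<longleftrightarrow> ?IV)")
proof -
  let ?P = "\<Sum>j=0..d. smult (fshift f j) ([:-1, 1:] ^ j)"
  let ?Qf = "\<Sum>j=1..d. smult (f (j - 1)) ([:-1, 1:] ^ (j - 1))"
  have tl: "\<forall>k\<in>{1..d}. (\<Sum>i=k..d. coeff ?P i) = coeff ?Qf (k - 1)"
    unfolding PQ using tl_PQ degree_Qf[OF assms(1)] by auto
  have III_IV: "?III \<longleftrightarrow> ?IV" using tl by auto
  have I_III: "?I \<Longrightarrow> ?III"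
  proof -
    assume ?I
    then obtain n D where D: "simplicial_complex n D" "quasi_forest D" "face_size D = d"
      "\<forall>i<d. int (fnum D i) = f i" by blast
    note V = fvec_Qp[OF D(1) D(3) assms(1) assms(2) D(4)]
    obtain A0 where "A0 \<in> D" "card A0 = d" using V(3) by blast
    from qf_tail[OF D(1) D(2) V(2) this] show ?III unfolding V(1) .
  qed
  have IV_II: "?IV \<Longrightarrow> ?II" using construct[OF assms(1)] by blast
  have II_I: "?II \<Longrightarrow> ?I" using forest_qf by blast
  show ?thesis using III_IV I_III IV_II II_I by blast
qed

end
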